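(* Let $\mathbb{H}=\{(z_1,z_2)\in \mathbb{C}^2:|z_2|<|z_1|<1\}$ be the Hartogs triangle. Then the Berezin transform $B_{\mathbb{H}}$ is not a bounded mapping on $L^2(\mathbb{H})$; that is, there is no constant $C<\infty$ such that $\|B_{\mathbb{H}}f\|_{L^2(\mathbb{H})}\leq C\|f\|_{L^2(\mathbb{H})}$ for all $f$ in $L^2(\mathbb{H})$ for which $B_{\mathbb{H}}f$ is defined by the integral formula below.
   Context: $K_{\mathbb{H}}$ denotes the Bergman kernel of $\mathbb{H}$ (the reproducing kernel of the Bergman space $A^2(\mathbb{H})$ of square-integrable holomorphic functions on $\mathbb{H}$); explicitly $K_{\mathbb{H}}(w,z)=\frac{w_1\overline{z}_1}{\pi^2(w_1\overline{z}_1-w_2\overline{z}_2)^2(1-w_1\overline{z}_1)^2}$, and $K_{\mathbb{H}}(z,z)>0$ for all $z\in\mathbb{H}$. The Berezin transform of a function $f$ on $\mathbb{H}$ is $B_{\mathbb{H}}f(z)=\int_{\mathbb{H}} f(w)\,\frac{|K_{\mathbb{H}}(w,z)|^2}{K_{\mathbb{H}}(z,z)}\,dV(w)$, $z\in\mathbb{H}$, where $dV$ is Lebesgue measure. *)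

theory Defs
  imports "HOL-Analysis.Analysis"
begin

definition hartogs :: "(complex \<times> complex) set" where
  "hartogs = {(z1, z2). cmod z2 < cmod z1 \<and> cmod z1 < 1}"

definition bergman_H :: "complex \<times> complex \<Rightarrow> complex \<times> complex \<Rightarrow> complex" where
  "bergman_H w z =
     (fst w * cnj (fst z)) /
     (complex_of_real (pi ^ 2) * (fst w * cnj (fst z) - snd w * cnj (snd z)) ^ 2
        * (1 - fst w * cnj (fst z)) ^ 2)"

definition berezin_H :: "(complex \<times> complex \<Rightarrow> complex) \<Rightarrow> complex \<times> complex \<Rightarrow> complex" where
  "berezin_H f z =
     integral\<^sup>L (lebesgue_on hartogs)
       (\<lambda>w. f w * complex_of_real ((cmod (bergman_H w z))\<^sup>2 / Re (bergman_H z z)))"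

definition L2_H :: "(complex \<times> complex \<Rightarrow> complex) \<Rightarrow> bool" where
  "L2_H f \<longleftrightarrow> f \<in> borel_measurable (lebesgue_on hartogs) \<and>
     integrable (lebesgue_on hartogs) (\<lambda>w. (cmod (f w))\<^sup>2)"

definition berezin_defined :: "(complex \<times> complex \<Rightarrow> complex) \<Rightarrow> bool" where
  "berezin_defined f \<longleftrightarrow> (\<forall>z\<in>hartogs. integrable (lebesgue_on hartogs)
       (\<lambda>w. f w * complex_of_real ((cmod (bergman_H w z))\<^sup>2 / Re (bergman_H z z))))"

definition L2norm_sq_H :: "(complex \<times> complex \<Rightarrow> complex) \<Rightarrow> ennreal" where
  "L2norm_sq_H f = (\<integral>\<^sup>+ w. ennreal ((cmod (f w))\<^sup>2) \<partial>(lebesgue_on hartogs))"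

end

theory Submission
  imports Defs
begin

definition kk :: "complex \<times> complex \<Rightarrow> complex \<times> complex \<Rightarrow> real" where
  "kk w z = (cmod (bergman_H w z))\<^sup>2 / Re (bergman_H z z)"

lemma hartogs_eq: "hartogs = {p. cmod (snd p) < cmod (fst p)} \<inter> {p. cmod (fst p) < 1}"
  by (auto simp: hartogs_def)

lemma hartogs_open: "open hartogs"
  unfolding hartogs_eq
  by (intro open_Int open_Collect_less continuous_intros)

lemma hartogs_borel[measurable]: "hartogs \<in> sets borel"
  using hartogs_open by (simp add: borel_open)

lemma hartogs_leb: "hartogs \<in> sets lebesgue"
  using hartogs_borel by simp

lemma hartogs_bounded: "bounded hartogs"
  unfolding bounded_iff
proof (intro exI[of _ 2] ballI)
  fix x assume "x \<in> hartogs"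
  then obtain a b where x: "x = (a,b)" "cmod b < cmod a" "cmod a < 1" by (auto simp: hartogs_def)
  have "norm x \<le> cmod a + cmod b" using norm_Pair_le x by simp
  then show "norm x \<le> 2" using x by simp
qed

lemma finite_H: "finite_measure (lebesgue_on hartogs)"
proof (rule finite_measureI)
  have "emeasure (lebesgue_on hartogs) (space (lebesgue_on hartogs)) = emeasure lebesgue hartogs"
    using hartogs_leb by (simp add: emeasure_restrict_space)
  also have "\<dots> = emeasure lborel hartogs" using hartogs_borel by simp
  finally show "emeasure (lebesgue_on hartogs) (space (lebesgue_on hartogs)) \<noteq> \<infinity>"
    using emeasure_bounded_finite[OF hartogs_bounded] by simp
qed

lemma borel_to_H: "f \<in> borel_measurable borel \<Longrightarrow> f \<in> borel_measurable (lebesgue_on S)"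
  by (intro measurable_restrict_space1 measurable_completion) simp

lemma emeasure_H: "A \<subseteq> hartogs \<Longrightarrow> A \<in> sets borel \<Longrightarrow> emeasure (lebesgue_on hartogs) A = emeasure lborel A"
  using hartogs_leb by (simp add: emeasure_restrict_space)

lemma sets_H: "A \<subseteq> hartogs \<Longrightarrow> A \<in> sets borel \<Longrightarrow> A \<in> sets (lebesgue_on hartogs)"
  using hartogs_leb by (simp add: sets_restrict_space_iff)

lemma K_meas: "(\<lambda>w. (cmod (bergman_H w z))\<^sup>2 / c) \<in> borel_measurable borel"
proof -
  have c1[measurable]: "(\<lambda>w. fst w * cnj (fst z)) \<in> borel_measurable borel"
    by (intro borel_measurable_continuous_onI continuous_intros)
  have c2[measurable]: "(\<lambda>w. complex_of_real (pi^2) * (fst w * cnj (fst z) - snd w * cnj (snd z))\<^sup>2 * (1 - fst w * cnj (fst z))\<^sup>2) \<in> borel_measurable borel"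
    by (intro borel_measurable_continuous_onI continuous_intros)
  show ?thesis unfolding bergman_H_def by measurable
qed

lemma kk_meas: "(\<lambda>w. kk w z) \<in> borel_measurable borel"
  unfolding kk_def by (rule K_meas)

lemma Re_diag:
  assumes "z \<in> hartogs"
  shows "Re (bergman_H z z) = (cmod (fst z))\<^sup>2 / (pi^2 * ((cmod (fst z))\<^sup>2 - (cmod (snd z))\<^sup>2)\<^sup>2 * (1 - (cmod (fst z))\<^sup>2)\<^sup>2)"
proof -
  have "bergman_H z z = complex_of_real ((cmod (fst z))\<^sup>2 / (pi^2 * ((cmod (fst z))\<^sup>2 - (cmod (snd z))\<^sup>2)\<^sup>2 * (1 - (cmod (fst z))\<^sup>2)\<^sup>2))"
    unfolding bergman_H_def complex_norm_square[symmetric] by simp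
  then show ?thesis by simp
qed

lemma norm_K: "cmod (bergman_H w z) = cmod (fst w) * cmod (fst z) /
   (pi^2 * (cmod (fst w * cnj (fst z) - snd w * cnj (snd z)))\<^sup>2 * (cmod (1 - fst w * cnj (fst z)))\<^sup>2)"
  unfolding bergman_H_def by (simp add: norm_divide norm_mult norm_power)

lemma kk_formula:
  assumes z: "z \<in> hartogs"
  shows "kk w z = (cmod (fst w))\<^sup>2 * ((cmod (fst z))\<^sup>2 - (cmod (snd z))\<^sup>2)\<^sup>2 * (1 - (cmod (fst z))\<^sup>2)\<^sup>2 /
      (pi^2 * (cmod (fst w * cnj (fst z) - snd w * cnj (snd z)))^4 * (cmod (1 - fst w * cnj (fst z)))^4)"
proof -
  have x: "cmod (snd z) < cmod (fst z)" "cmod (fst z) < 1" using z by (auto simp: hartogs_def split: prod.splits)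
  have x0: "cmod (fst z) > 0" using x(1) norm_ge_zero[of "snd z"] by linarith
  have p1: "(cmod (fst z))\<^sup>2 - (cmod (snd z))\<^sup>2 \<noteq> 0"
  proof -
    have "(cmod (snd z))^2 < (cmod (fst z))^2" by (rule power_strict_mono) (use x in auto)
    then show ?thesis using x(1) by auto
  qed
  have p2: "1 - (cmod (fst z))\<^sup>2 \<noteq> 0"
  proof -
    have "(cmod (fst z))^2 < 1^2" by (rule power_strict_mono) (use x in auto)
    then show ?thesis by simp
  qed
  show ?thesis unfolding kk_def Re_diag[OF z] norm_K using x0 p1 p2
    by (simp add: divide_simps)
qed

lemma aux_eq: fixes a P u v :: real
  shows "a \<noteq> 0 \<Longrightarrow> a^2 * P / (pi^2 * ((a*u)^4 * v)) = P / (pi^2 * a^2 * u^4 * v)"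
  by (cases "u = 0"; cases "v = 0") (simp_all add: power_mult_distrib field_simps power4_eq_xxxx power2_eq_square)

lemma kk_bounds:
  assumes z: "z \<in> hartogs" and w: "w \<in> hartogs"
  shows "kk w z \<ge> ((cmod (fst z))\<^sup>2 - (cmod (snd z))\<^sup>2)\<^sup>2 * (1 - (cmod (fst z))\<^sup>2)\<^sup>2 / (256 * pi^2 * (cmod (fst w))\<^sup>2)"
    and "kk w z \<le> ((cmod (fst z))\<^sup>2 - (cmod (snd z))\<^sup>2)\<^sup>2 * (1 - (cmod (fst z))\<^sup>2)\<^sup>2 /
           (pi^2 * (cmod (fst w))\<^sup>2 * (cmod (fst z) - cmod (snd z))^4 * (1 - cmod (fst z))^4)"
proof -
  define a where "a = cmod (fst w)"
  define b where "b = cmod (snd w)"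
  define x where "x = cmod (fst z)"
  define y where "y = cmod (snd z)"
  define D1 where "D1 = cmod (fst w * cnj (fst z) - snd w * cnj (snd z))"
  define D2 where "D2 = cmod (1 - fst w * cnj (fst z))"
  define P where "P = (x\<^sup>2 - y\<^sup>2)\<^sup>2 * (1 - x\<^sup>2)\<^sup>2"
  have xy: "y < x" "x < 1" "0 \<le> y" using z by (auto simp: hartogs_def x_def y_def split: prod.splits)
  have ab: "b < a" "a < 1" "0 \<le> b" using w by (auto simp: hartogs_def a_def b_def split: prod.splits)
  have a0: "a > 0" "x > 0" using xy ab by auto
  have kf: "kk w z = a\<^sup>2 * P / (pi^2 * D1^4 * D2^4)"
    unfolding kk_formula[OF z] a_def P_def x_def y_def D1_def D2_def by (simp add: mult.assoc)
  have P0: "P \<ge> 0" unfolding P_def by simp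
  have D1u: "D1 \<le> a*x + b*y"
    unfolding D1_def a_def b_def x_def y_def
    by (metis complex_mod_cnj norm_mult norm_triangle_ineq4)
  have D1l: "D1 \<ge> a*x - b*y"
    unfolding D1_def a_def b_def x_def y_def
    by (metis complex_mod_cnj norm_mult norm_triangle_ineq2)
  have D2u: "D2 \<le> 1 + a*x"
    unfolding D2_def a_def x_def
    by (metis complex_mod_cnj norm_mult norm_one norm_triangle_ineq4)
  have D2l: "D2 \<ge> 1 - a*x"
    unfolding D2_def a_def x_def
    by (metis complex_mod_cnj norm_mult norm_one norm_triangle_ineq2)
  have ax: "a*x \<le> a" "a * x \<le> x" using xy ab a0 by (simp_all add: mult_left_le mult_left_le_one_le)
  have by1: "b*y \<le> a*y" using xy ab by (simp add: mult_right_mono)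
  have by2: "a*y < a*x" using xy a0 by simp
  have by3: "b*y \<le> b" using xy ab by (simp add: mult_left_le)
  have D1pos: "D1 \<ge> a*(x-y)" "a*(x-y) > 0" using D1l by1 by2 by (simp_all add: algebra_simps)
  have D1le: "D1 \<le> 2*a" using D1u ax by3 ab by linarith
  have D2pos: "D2 \<ge> 1 - x" "1 - x > 0" using D2l ax xy by linarith+
  have D2le: "D2 \<le> 2" using D2u ax ab by linarith
  have den_u: "D1^4 * D2^4 \<le> (2*a)^4 * 2^4"
    by (intro mult_mono power_mono) (use D1le D2le D1pos D2pos in auto)
  have den_l: "(a*(x-y))^4 * (1-x)^4 \<le> D1^4 * D2^4"
    by (intro mult_mono power_mono) (use D1le D2le D1pos D2pos in auto)
  have dpos: "0 < (a*(x-y))^4 * (1-x)^4" using D1pos D2pos a0 xy by (intro mult_pos_pos zero_less_power) auto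
  have D12: "0 < D1" "0 < D2" using D1pos D2pos by linarith+
  show "kk w z \<ge> ((cmod (fst z))\<^sup>2 - (cmod (snd z))\<^sup>2)\<^sup>2 * (1 - (cmod (fst z))\<^sup>2)\<^sup>2 / (256 * pi^2 * (cmod (fst w))\<^sup>2)"
  proof -
    have "P / (256 * pi^2 * a\<^sup>2) = a\<^sup>2 * P / (pi^2 * ((2*a)^4 * 2^4))"
      using a0 by (simp add: field_simps power2_eq_square power4_eq_xxxx)
    also have "\<dots> \<le> a\<^sup>2 * P / (pi^2 * (D1^4 * D2^4))"
      by (intro divide_left_mono mult_left_mono den_u) (use P0 dpos den_l D12 a0 in auto)
    finally show ?thesis unfolding kf P_def x_def y_def a_def by (simp add: mult.assoc)
  qed
  show "kk w z \<le> ((cmod (fst z))\<^sup>2 - (cmod (snd z))\<^sup>2)\<^sup>2 * (1 - (cmod (fst z))\<^sup>2)\<^sup>2 /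
           (pi^2 * (cmod (fst w))\<^sup>2 * (cmod (fst z) - cmod (snd z))^4 * (1 - cmod (fst z))^4)"
  proof -
    have "a\<^sup>2 * P / (pi^2 * (D1^4 * D2^4)) \<le> a\<^sup>2 * P / (pi^2 * ((a*(x-y))^4 * (1-x)^4))"
      by (intro divide_left_mono mult_left_mono den_l) (use P0 dpos den_l in auto)
    also have "\<dots> = P / (pi^2 * a\<^sup>2 * (x-y)^4 * (1-x)^4)"
      by (rule aux_eq) (use a0 in auto)
    finally show ?thesis unfolding kf P_def x_def y_def a_def by (simp add: mult.assoc)
  qed
qed

definition Bx :: "real \<Rightarrow> (complex \<times> complex) set" where
 "Bx a = box (Complex a 0, Complex 0 0) (Complex (2*a) a, Complex (a/2) (a/2))"

lemma mem_Bx: "w \<in> Bx a \<longleftrightarrow> a < Re (fst w) \<and> Re (fst w) < 2*a \<and> 0 < Im (fst w) \<and> Im (fst w) < a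
   \<and> 0 < Re (snd w) \<and> Re (snd w) < a/2 \<and> 0 < Im (snd w) \<and> Im (snd w) < a/2"
  by (cases w) (auto simp: Bx_def box_def Basis_prod_def Basis_complex_def inner_Pair_0 ball_Un)

lemma meas_Bx: "a > 0 \<Longrightarrow> emeasure lborel (Bx a) = ennreal (a^4/4)"
  unfolding Bx_def
  by (subst emeasure_lborel_box)
     (auto simp: Basis_prod_def Basis_complex_def inner_Pair_0 prod.union_disjoint power4_eq_xxxx)

lemma Bx_borel[measurable]: "Bx a \<in> sets borel"
  unfolding Bx_def by (simp add: borel_open)

lemma Bx_norm:
  assumes "w \<in> Bx a"
  shows "a\<^sup>2 < (cmod (fst w))\<^sup>2" "(cmod (fst w))\<^sup>2 < 5 * a\<^sup>2" "(cmod (snd w))\<^sup>2 < a\<^sup>2 / 2"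
proof -
  note m = assms[unfolded mem_Bx]
  have a: "a > 0" using m by linarith
  have r1: "a\<^sup>2 < (Re (fst w))\<^sup>2" by (rule power_strict_mono) (use m a in auto)
  have r2: "(Re (fst w))\<^sup>2 < (2*a)\<^sup>2" by (rule power_strict_mono) (use m a in auto)
  have r3: "(Im (fst w))\<^sup>2 < a\<^sup>2" by (rule power_strict_mono) (use m a in auto)
  have r4: "(Re (snd w))\<^sup>2 < (a/2)\<^sup>2" by (rule power_strict_mono) (use m a in auto)
  have r5: "(Im (snd w))\<^sup>2 < (a/2)\<^sup>2" by (rule power_strict_mono) (use m a in auto)
  show "a\<^sup>2 < (cmod (fst w))\<^sup>2" using r1 cmod_power2[of "fst w"] zero_le_power2[of "Im (fst w)"] by linarith
  show "(cmod (fst w))\<^sup>2 < 5 * a\<^sup>2" using r2 r3 by (simp add: cmod_power2 power_mult_distrib)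
  show "(cmod (snd w))\<^sup>2 < a\<^sup>2 / 2" using r4 r5 by (simp add: cmod_power2 power_divide)
qed

lemma Bx_sub: assumes "0 < a" "a \<le> 1/4" shows "Bx a \<subseteq> hartogs"
proof
  fix w assume w: "w \<in> Bx a"
  note n = Bx_norm[OF w]
  have "a\<^sup>2 \<le> (1/4)\<^sup>2" by (rule power_mono) (use assms in auto)
  then have "a\<^sup>2 \<le> 1/16" by (simp add: power_divide)
  then have "(cmod (fst w))\<^sup>2 < 1" using n by linarith
  then have 1: "cmod (fst w) < 1" by (simp add: abs_square_less_1)
  have "(cmod (snd w))\<^sup>2 < (cmod (fst w))\<^sup>2" using n assms by simp
  then have 2: "cmod (snd w) < cmod (fst w)" by (rule power_less_imp_less_base) simp
  show "w \<in> hartogs" using 1 2 by (cases w) (simp add: hartogs_def)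
qed

definition sc :: "nat \<Rightarrow> real" where "sc k = 1 / (4 * 2^k)"

lemma sc_pos: "sc k > 0" and sc_le: "sc k \<le> 1/4"
  by (auto simp: sc_def)

lemma sc_mono: "j \<le> k \<Longrightarrow> sc k \<le> sc j"
  by (auto simp: sc_def divide_simps)

lemma sc_double: "j < k \<Longrightarrow> 2 * sc k \<le> sc j"
proof -
  assume "j < k"
  then have "(2::real) ^ Suc j \<le> 2 ^ k" by (intro power_increasing) auto
  then show ?thesis by (simp add: sc_def divide_simps)
qed

lemma Bx_disj: "w \<in> Bx (sc j) \<Longrightarrow> w \<in> Bx (sc k) \<Longrightarrow> j = k"
proof (rule ccontr)
  assume a: "w \<in> Bx (sc j)" "w \<in> Bx (sc k)" "j \<noteq> k"
  show False
  proof (cases "j < k")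
    case True
    then show False using sc_double[OF True] a unfolding mem_Bx by linarith
  next
    case False
    then have "k < j" using a by simp
    then show False using sc_double[OF \<open>k < j\<close>] a unfolding mem_Bx by linarith
  qed
qed

definition UU :: "nat \<Rightarrow> (complex \<times> complex) set" where
  "UU n = (\<Union>k<n. Bx (sc k))"

definition gg :: "nat \<Rightarrow> complex \<times> complex \<Rightarrow> real" where
  "gg n w = indicator (UU n) w / (cmod (fst w))\<^sup>2"

lemma UU_borel[measurable]: "UU n \<in> sets borel"
  unfolding UU_def by measurable

lemma UU_sub: "UU n \<subseteq> hartogs"
  unfolding UU_def using Bx_sub[OF sc_pos sc_le] by blast

lemma UU_lower: "w \<in> UU n \<Longrightarrow> (sc n)\<^sup>2 < (cmod (fst w))\<^sup>2"
proof -
  assume "w \<in> UU n"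
  then obtain k where k: "k < n" "w \<in> Bx (sc k)" unfolding UU_def by blast
  have "(sc n)\<^sup>2 \<le> (sc k)\<^sup>2" by (rule power_mono) (use sc_mono[of k n] sc_pos[of n] k in auto)
  then show ?thesis using Bx_norm(1)[OF k(2)] by linarith
qed

lemma gg_meas[measurable]: "gg n \<in> borel_measurable borel"
proof -
  have [measurable]: "(\<lambda>w::complex\<times>complex. (cmod (fst w))\<^sup>2) \<in> borel_measurable borel"
    by (intro borel_measurable_continuous_onI continuous_intros)
  show ?thesis unfolding gg_def by measurable
qed

lemma gg_nonneg: "gg n w \<ge> 0"
  by (simp add: gg_def)

lemma gg_in: "w \<in> UU n \<Longrightarrow> gg n w = 1 / (cmod (fst w))\<^sup>2"
  by (simp add: gg_def)

lemma gg_out: "w \<notin> UU n \<Longrightarrow> gg n w = 0"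
  by (simp add: gg_def)

lemma gg_bound: "gg n w \<le> 1 / (sc n)\<^sup>2"
proof (cases "w \<in> UU n")
  case True
  have "(sc n)\<^sup>2 > 0" using sc_pos[of n] by simp
  then show ?thesis using UU_lower[OF True] gg_in[OF True] by (simp add: frac_le)
next
  case False then show ?thesis by (simp add: gg_out)
qed

definition c0 :: real where "c0 = 1 / (1048576 * pi^2)"

lemma c0_pos: "c0 > 0" by (simp add: c0_def)

lemma kk_nonneg: "z \<in> hartogs \<Longrightarrow> w \<in> hartogs \<Longrightarrow> kk w z \<ge> 0"
  by (rule order_trans[OF _ kk_bounds(1)]) auto

lemma gk_upper:
  assumes z: "z \<in> hartogs" and w: "w \<in> hartogs"
  defines "Kz \<equiv> ((cmod (fst z))\<^sup>2 - (cmod (snd z))\<^sup>2)\<^sup>2 * (1 - (cmod (fst z))\<^sup>2)\<^sup>2 /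
           (pi^2 * (cmod (fst z) - cmod (snd z))^4 * (1 - cmod (fst z))^4)"
  shows "gg n w * kk w z \<le> (1/(sc n)\<^sup>2)\<^sup>2 * Kz"
proof (cases "w \<in> UU n")
  case True
  define a where "a = (cmod (fst w))\<^sup>2"
  have a: "(sc n)\<^sup>2 < a" using UU_lower[OF True] by (simp add: a_def)
  have s0: "(sc n)\<^sup>2 > 0" using sc_pos[of n] by simp
  have K0: "Kz \<ge> 0" unfolding Kz_def by simp
  have kb: "kk w z \<le> Kz / a" using kk_bounds(2)[OF z w] unfolding Kz_def a_def by (simp add: field_simps)
  have ga: "gg n w = 1/a" using gg_in[OF True] by (simp add: a_def)
  have "gg n w * kk w z \<le> (1/a) * (Kz / a)"
    unfolding ga by (intro mult_left_mono kb) (simp add: a_def)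
  also have "\<dots> = Kz * (1/a)\<^sup>2" by (simp add: power2_eq_square)
  also have "\<dots> \<le> Kz * (1/(sc n)\<^sup>2)\<^sup>2"
    by (intro mult_left_mono power_mono) (use a s0 K0 in \<open>auto simp: frac_le a_def\<close>)
  finally show ?thesis by (simp add: mult.commute)
next
  case False
  have K0: "Kz \<ge> 0" unfolding Kz_def by simp
  then show ?thesis using False by (simp add: gg_out)
qed

lemma Pz_lower:
  assumes z: "z \<in> Bx (1/4)"
  shows "((cmod (fst z))\<^sup>2 - (cmod (snd z))\<^sup>2)\<^sup>2 * (1 - (cmod (fst z))\<^sup>2)\<^sup>2 \<ge> 1/4096"
proof -
  note n = Bx_norm[OF z]
  have 1: "1/32 \<le> (cmod (fst z))\<^sup>2 - (cmod (snd z))\<^sup>2" using n by (simp add: power_divide)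
  have 2: "1/2 \<le> 1 - (cmod (fst z))\<^sup>2" using n by (simp add: power_divide)
  have "(1/32)\<^sup>2 * (1/2)\<^sup>2 \<le> ((cmod (fst z))\<^sup>2 - (cmod (snd z))\<^sup>2)\<^sup>2 * (1 - (cmod (fst z))\<^sup>2)\<^sup>2"
    by (intro mult_mono power_mono) (use 1 2 in auto)
  then show ?thesis by (simp add: power_divide)
qed

lemma gk_lower:
  assumes z: "z \<in> Bx (1/4)" and w: "w \<in> hartogs"
  shows "c0 * (gg n w)\<^sup>2 \<le> gg n w * kk w z"
proof (cases "w \<in> UU n")
  case True
  have zH: "z \<in> hartogs" using Bx_sub[of "1/4"] z by auto
  define a where "a = (cmod (fst w))\<^sup>2"
  have a: "(sc n)\<^sup>2 < a" using UU_lower[OF True] by (simp add: a_def)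
  have s0: "(sc n)\<^sup>2 > 0" using sc_pos[of n] by simp
  have a0: "a > 0" using a s0 by linarith
  have "c0 / a = (1/4096) / (256 * pi^2 * a)" by (simp add: c0_def)
  also have "\<dots> \<le> ((cmod (fst z))\<^sup>2 - (cmod (snd z))\<^sup>2)\<^sup>2 * (1 - (cmod (fst z))\<^sup>2)\<^sup>2 / (256 * pi^2 * a)"
    by (intro divide_right_mono Pz_lower[OF z]) (use a0 in auto)
  also have "\<dots> \<le> kk w z" using kk_bounds(1)[OF zH w] by (simp add: a_def)
  finally have k: "c0 / a \<le> kk w z" .
  have "c0 * (gg n w)\<^sup>2 = (1/a) * (c0 / a)" using gg_in[OF True] by (simp add: a_def power2_eq_square)
  also have "\<dots> \<le> (1/a) * kk w z" by (rule mult_left_mono[OF k]) (use a0 in auto)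
  also have "\<dots> = gg n w * kk w z" using gg_in[OF True] by (simp add: a_def)
  finally show ?thesis .
next
  case False
  then show ?thesis by (simp add: gg_out)
qed

lemma sum_pointwise:
  "(\<Sum>k<n. ennreal (1/(25*(sc k)^4)) * indicator (Bx (sc k)) w) \<le> ennreal ((gg n w)\<^sup>2)"
proof (cases "\<exists>j<n. w \<in> Bx (sc j)")
  case True
  then obtain j where j: "j < n" "w \<in> Bx (sc j)" by blast
  have "(\<Sum>k<n. ennreal (1/(25*(sc k)^4)) * indicator (Bx (sc k)) w)
      = ennreal (1/(25*(sc j)^4)) * indicator (Bx (sc j)) w + (\<Sum>k\<in>{..<n} - {j}. ennreal (1/(25*(sc k)^4)) * indicator (Bx (sc k)) w)"
    using j by (subst sum.remove[of _ j]) auto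
  also have "(\<Sum>k\<in>{..<n} - {j}. ennreal (1/(25*(sc k)^4)) * indicator (Bx (sc k)) w) = 0"
  proof (rule sum.neutral, intro ballI)
    fix k assume k: "k \<in> {..<n} - {j}"
    then have "w \<notin> Bx (sc k)" using Bx_disj[of w k j] j by auto
    then show "ennreal (1/(25*(sc k)^4)) * indicator (Bx (sc k)) w = 0" by simp
  qed
  finally have eq: "(\<Sum>k<n. ennreal (1/(25*(sc k)^4)) * indicator (Bx (sc k)) w) = ennreal (1/(25*(sc j)^4))"
    using j by simp
  have wU: "w \<in> UU n" using j unfolding UU_def by blast
  define a where "a = (cmod (fst w))\<^sup>2"
  have s0: "sc j > 0" by (rule sc_pos)
  have a1: "a < 5 * (sc j)\<^sup>2" using Bx_norm(2)[OF j(2)] by (simp add: a_def)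
  have a0: "a > 0" using Bx_norm(1)[OF j(2)] s0 unfolding a_def by (smt (verit) zero_le_power2)
  have "a\<^sup>2 \<le> (5 * (sc j)\<^sup>2)\<^sup>2" by (rule power_mono) (use a1 a0 in auto)
  then have "a\<^sup>2 \<le> 25 * (sc j)^4" by (simp add: power_mult_distrib power2_eq_square power4_eq_xxxx)
  then have "1/(25*(sc j)^4) \<le> 1 / a\<^sup>2"
    by (intro divide_left_mono) (use a0 s0 in auto)
  also have "\<dots> = (gg n w)\<^sup>2" using gg_in[OF wU] by (simp add: a_def power_divide)
  finally show ?thesis unfolding eq by (rule ennreal_leI)
next
  case False
  then have "(\<Sum>k<n. ennreal (1/(25*(sc k)^4)) * indicator (Bx (sc k)) w) = 0"
    by (intro sum.neutral) (auto simp: indicator_def)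
  then show ?thesis by simp
qed

lemma key:
  "\<exists>Mr. real n / 100 \<le> Mr \<and> L2_H (\<lambda>w. complex_of_real (gg n w)) \<and>
      berezin_defined (\<lambda>w. complex_of_real (gg n w)) \<and>
      L2norm_sq_H (\<lambda>w. complex_of_real (gg n w)) = ennreal Mr \<and>
      ennreal ((c0 * Mr)\<^sup>2 / 1024) \<le> L2norm_sq_H (berezin_H (\<lambda>w. complex_of_real (gg n w)))"
proof -
  interpret fm: finite_measure "lebesgue_on hartogs" by (rule finite_H)
  let ?M = "lebesgue_on hartogs"
  let ?f = "\<lambda>w. complex_of_real (gg n w)"
  have gm[measurable]: "gg n \<in> borel_measurable ?M" by (rule borel_to_H) (rule gg_meas)
  have int_g2: "integrable ?M (\<lambda>w. (gg n w)\<^sup>2)"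
  proof (rule fm.integrable_const_bound[where B="(1/(sc n)\<^sup>2)\<^sup>2"])
    show "AE w in ?M. norm ((gg n w)\<^sup>2) \<le> (1/(sc n)\<^sup>2)\<^sup>2"
    proof (rule AE_I2)
      fix w show "norm ((gg n w)\<^sup>2) \<le> (1/(sc n)\<^sup>2)\<^sup>2"
        using power_mono[OF gg_bound gg_nonneg, of n w 2] by simp
    qed
  qed measurable
  have fmeas: "?f \<in> borel_measurable ?M" by measurable
  have L2: "L2_H ?f" unfolding L2_H_def using fmeas int_g2 by simp
  have int_gk: "integrable ?M (\<lambda>w. gg n w * kk w z)" if z: "z \<in> hartogs" for z
  proof -
    have km[measurable]: "(\<lambda>w. kk w z) \<in> borel_measurable ?M" by (rule borel_to_H[OF kk_meas])
    define Kz where "Kz = ((cmod (fst z))\<^sup>2 - (cmod (snd z))\<^sup>2)\<^sup>2 * (1 - (cmod (fst z))\<^sup>2)\<^sup>2 /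
           (pi^2 * (cmod (fst z) - cmod (snd z))^4 * (1 - cmod (fst z))^4)"
    show ?thesis
    proof (rule fm.integrable_const_bound[where B="(1/(sc n)\<^sup>2)\<^sup>2 * Kz"])
      show "AE w in ?M. norm (gg n w * kk w z) \<le> (1/(sc n)\<^sup>2)\<^sup>2 * Kz"
      proof (rule AE_I2)
        fix w assume "w \<in> space ?M"
        then have w: "w \<in> hartogs" by simp
        have "norm (gg n w * kk w z) = gg n w * kk w z"
          using gg_nonneg[of n w] kk_nonneg[OF z w] by simp
        also have "\<dots> \<le> (1/(sc n)\<^sup>2)\<^sup>2 * Kz" unfolding Kz_def by (rule gk_upper[OF z w])
        finally show "norm (gg n w * kk w z) \<le> (1/(sc n)\<^sup>2)\<^sup>2 * Kz" .
      qed
    qed measurable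
  qed
  have defd: "berezin_defined ?f"
    unfolding berezin_defined_def
  proof
    fix z assume z: "z \<in> hartogs"
    have eq: "(\<lambda>w. ?f w * complex_of_real ((cmod (bergman_H w z))\<^sup>2 / Re (bergman_H z z)))
        = (\<lambda>w. complex_of_real (gg n w * kk w z))" by (simp add: kk_def fun_eq_iff)
    show "integrable ?M (\<lambda>w. ?f w * complex_of_real ((cmod (bergman_H w z))\<^sup>2 / Re (bergman_H z z)))"
      unfolding eq complex_of_real_integrable_eq by (rule int_gk[OF z])
  qed
  define Mr where "Mr = integral\<^sup>L ?M (\<lambda>w. (gg n w)\<^sup>2)"
  have Mr0: "Mr \<ge> 0" unfolding Mr_def by (rule integral_nonneg_AE) simp
  have Nf: "L2norm_sq_H ?f = ennreal Mr"
  proof -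
    have "L2norm_sq_H ?f = (\<integral>\<^sup>+ w. ennreal ((gg n w)\<^sup>2) \<partial>?M)"
      unfolding L2norm_sq_H_def by simp
    also have "\<dots> = ennreal Mr" unfolding Mr_def
      by (rule nn_integral_eq_integral[OF int_g2]) simp
    finally show ?thesis .
  qed
  have BxM: "Bx (sc k) \<in> sets ?M" for k by (rule sets_H[OF Bx_sub[OF sc_pos sc_le] Bx_borel])
  have t: "ennreal (1/(25*(sc k)^4)) * emeasure ?M (Bx (sc k)) = ennreal (1/100)" for k
  proof -
    have "emeasure ?M (Bx (sc k)) = ennreal ((sc k)^4/4)"
      using emeasure_H[OF Bx_sub[OF sc_pos sc_le] Bx_borel] meas_Bx[OF sc_pos] by simp
    moreover have "(1/(25*(sc k)^4)) * ((sc k)^4/4) = 1/100" using sc_pos[of k] by simp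
    ultimately show ?thesis by (simp add: ennreal_mult[symmetric])
  qed
  have "ennreal (real n / 100) = (\<Sum>k<n. ennreal (1/(25*(sc k)^4)) * emeasure ?M (Bx (sc k)))"
    by (simp add: t ennreal_of_nat_eq_real_of_nat ennreal_mult[symmetric])
  also have "\<dots> = (\<integral>\<^sup>+ w. (\<Sum>k<n. ennreal (1/(25*(sc k)^4)) * indicator (Bx (sc k)) w) \<partial>?M)"
  proof (subst nn_integral_sum)
    show "(\<lambda>w. ennreal (1/(25*(sc k)^4)) * indicator (Bx (sc k)) w) \<in> borel_measurable ?M" for k
      using BxM[of k] by (intro borel_measurable_times_ennreal borel_measurable_const borel_measurable_indicator)
  qed (simp add: nn_integral_cmult_indicator BxM)
  also have "\<dots> \<le> (\<integral>\<^sup>+ w. ennreal ((gg n w)\<^sup>2) \<partial>?M)"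
    by (rule nn_integral_mono) (rule sum_pointwise)
  also have "\<dots> = ennreal Mr" unfolding Mr_def
    by (rule nn_integral_eq_integral[OF int_g2]) simp
  finally have Mrn: "real n / 100 \<le> Mr" using Mr0 by (simp add: ennreal_le_iff)
  have Bz: "c0 * Mr \<le> cmod (berezin_H ?f z)" if z: "z \<in> Bx (1/4)" for z
  proof -
    have zH: "z \<in> hartogs" using Bx_sub[of "1/4"] z by auto
    have "berezin_H ?f z = integral\<^sup>L ?M (\<lambda>w. complex_of_real (gg n w * kk w z))"
      unfolding berezin_H_def kk_def by simp
    also have "\<dots> = complex_of_real (integral\<^sup>L ?M (\<lambda>w. gg n w * kk w z))"
      by (rule integral_complex_of_real)
    finally have eq: "berezin_H ?f z = complex_of_real (integral\<^sup>L ?M (\<lambda>w. gg n w * kk w z))" .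
    have "c0 * Mr = integral\<^sup>L ?M (\<lambda>w. c0 * (gg n w)\<^sup>2)" unfolding Mr_def by simp
    also have "\<dots> \<le> integral\<^sup>L ?M (\<lambda>w. gg n w * kk w z)"
    proof (rule integral_mono)
      show "integrable ?M (\<lambda>w. c0 * (gg n w)\<^sup>2)" using int_g2 by simp
      show "integrable ?M (\<lambda>w. gg n w * kk w z)" by (rule int_gk[OF zH])
      fix w assume "w \<in> space ?M"
      then have w: "w \<in> hartogs" by simp
      show "c0 * (gg n w)\<^sup>2 \<le> gg n w * kk w z" by (rule gk_lower[OF z w])
    qed
    also have "\<dots> \<le> cmod (berezin_H ?f z)" unfolding eq by simp
    finally show ?thesis .
  qed
  have Z: "Bx (1/4) \<in> sets ?M" by (rule sets_H[OF Bx_sub Bx_borel]) auto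
  have "ennreal ((c0 * Mr)\<^sup>2 / 1024) = ennreal ((c0 * Mr)\<^sup>2) * emeasure ?M (Bx (1/4))"
  proof -
    have "emeasure ?M (Bx (1/4)) = ennreal ((1/4)^4/4)"
      using emeasure_H[OF Bx_sub Bx_borel, of "1/4"] meas_Bx[of "1/4"] by simp
    then show ?thesis by (simp add: ennreal_mult[symmetric] power_divide)
  qed
  also have "\<dots> = (\<integral>\<^sup>+ w. ennreal ((c0 * Mr)\<^sup>2) * indicator (Bx (1/4)) w \<partial>?M)"
    by (rule nn_integral_cmult_indicator[OF Z, symmetric])
  also have "\<dots> \<le> (\<integral>\<^sup>+ w. ennreal ((cmod (berezin_H ?f w))\<^sup>2) \<partial>?M)"
  proof (rule nn_integral_mono)
    fix w show "ennreal ((c0 * Mr)\<^sup>2) * indicator (Bx (1/4)) w \<le> ennreal ((cmod (berezin_H ?f w))\<^sup>2)"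
    proof (cases "w \<in> Bx (1/4)")
      case True
      have "(c0 * Mr)\<^sup>2 \<le> (cmod (berezin_H ?f w))\<^sup>2"
        by (rule power_mono[OF Bz[OF True]]) (use c0_pos Mr0 in simp)
      then show ?thesis using True by (simp add: ennreal_leI)
    qed simp
  qed
  also have "\<dots> = L2norm_sq_H (berezin_H ?f)" unfolding L2norm_sq_H_def ..
  finally have NB: "ennreal ((c0 * Mr)\<^sup>2 / 1024) \<le> L2norm_sq_H (berezin_H ?f)" .
  show ?thesis using Mrn L2 defd Nf NB by blast
qed

theorem theorem2:
  shows "\<not> (\<exists>C::real. \<forall>f. L2_H f \<and> berezin_defined f \<longrightarrow>
            L2norm_sq_H (berezin_H f) \<le> ennreal (C\<^sup>2) * L2norm_sq_H f)"
proof
  assume "\<exists>C::real. \<forall>f. L2_H f \<and> berezin_defined f \<longrightarrow>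
            L2norm_sq_H (berezin_H f) \<le> ennreal (C\<^sup>2) * L2norm_sq_H f"
  then obtain C :: real where hC: "\<And>f. L2_H f \<Longrightarrow> berezin_defined f \<Longrightarrow>
            L2norm_sq_H (berezin_H f) \<le> ennreal (C\<^sup>2) * L2norm_sq_H f" by blast
  obtain n :: nat where n: "102400 * C\<^sup>2 / c0\<^sup>2 < real n" using reals_Archimedean2 by blast
  obtain Mr where Mr: "real n / 100 \<le> Mr" "L2_H (\<lambda>w. complex_of_real (gg n w))"
      "berezin_defined (\<lambda>w. complex_of_real (gg n w))"
      "L2norm_sq_H (\<lambda>w. complex_of_real (gg n w)) = ennreal Mr"
      "ennreal ((c0 * Mr)\<^sup>2 / 1024) \<le> L2norm_sq_H (berezin_H (\<lambda>w. complex_of_real (gg n w)))"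
    using key[of n] by blast
  have c0: "c0 > 0" by (rule c0_pos)
  have "0 \<le> 102400 * C\<^sup>2 / c0\<^sup>2" by simp
  then have npos: "real n > 0" using n by linarith
  then have Mpos: "Mr > 0" using Mr(1) by linarith
  have "ennreal ((c0 * Mr)\<^sup>2 / 1024) \<le> ennreal (C\<^sup>2) * ennreal Mr"
    using Mr(5) hC[OF Mr(2) Mr(3)] Mr(4) by simp
  also have "\<dots> = ennreal (C\<^sup>2 * Mr)" using Mpos by (simp add: ennreal_mult[symmetric])
  finally have "(c0 * Mr)\<^sup>2 / 1024 \<le> C\<^sup>2 * Mr"
    using Mpos by (simp add: ennreal_le_iff)
  then have "c0\<^sup>2 * Mr * Mr \<le> (1024 * C\<^sup>2) * Mr" by (simp add: power2_eq_square algebra_simps)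
  then have le1: "c0\<^sup>2 * Mr \<le> 1024 * C\<^sup>2" using Mpos by simp
  have "c0\<^sup>2 * real n \<le> c0\<^sup>2 * (Mr * 100)" using Mr(1) by (intro mult_left_mono) auto
  also have "\<dots> = 100 * (c0\<^sup>2 * Mr)" by simp
  also have "\<dots> \<le> 100 * (1024 * C\<^sup>2)" using le1 by linarith
  finally have "c0\<^sup>2 * real n \<le> 102400 * C\<^sup>2" by simp
  then have "real n \<le> 102400 * C\<^sup>2 / c0\<^sup>2" using c0 by (simp add: field_simps)
  then show False using n by simp
qed

end
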